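(* Let $q$ be an odd prime power, $n=2^v$ with $v\ge1$, and $t$ an integer with $qt\equiv t\pmod{2^v}$ and $\nu_2(t)<v$. Type-I duadic splittings of $\mathbb{Z}_{2^v}$ given by $\tau_t$ exist if and only if $\nu_2(t)<\nu_2(q-1)$.
   Context: $\mu_q:\mathbb{Z}_n\to\mathbb{Z}_n$, $i\mapsto qi\bmod n$; $P$ is $\mu_q$-invariant if $\mu_q(P)=P$. $\tau_t:\mathbb{Z}_n\to\mathbb{Z}_n$, $i\mapsto i+t\bmod n$ (a $q$-translation). Type-I duadic splittings of $\mathbb{Z}_n$ given by $\tau_t$ exist if there is a $\mu_q$-invariant $P$ with $\mathbb{Z}_n=P\cup\tau_t(P)$ a disjoint union. $\nu_2$ is the $2$-adic valuation. *)

theory Defs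
  imports "HOL-Computational_Algebra.Primes"
begin

definition Zn :: "nat \<Rightarrow> int set" where
  "Zn n = {0..<int n}"

definition mu :: "nat \<Rightarrow> int \<Rightarrow> int \<Rightarrow> int" where
  "mu n q i = (q * i) mod int n"

definition tau :: "nat \<Rightarrow> int \<Rightarrow> int \<Rightarrow> int" where
  "tau n t i = (i + t) mod int n"

definition mu_invariant :: "nat \<Rightarrow> int \<Rightarrow> int set \<Rightarrow> bool" where
  "mu_invariant n q P \<longleftrightarrow> mu n q ` P = P"

definition typeI_duadic_exists :: "nat \<Rightarrow> int \<Rightarrow> int \<Rightarrow> bool" where
  "typeI_duadic_exists n q t \<longleftrightarrow>
     (\<exists>P. P \<subseteq> Zn n \<and> mu_invariant n q P \<and>
          P \<union> tau n t ` P = Zn n \<and> P \<inter> tau n t ` P = {})"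

definition prime_power :: "nat \<Rightarrow> bool" where
  "prime_power q \<longleftrightarrow> (\<exists>p k. prime p \<and> k \<ge> 1 \<and> q = p ^ k)"

abbreviation nu2 :: "int \<Rightarrow> nat" where
  "nu2 x \<equiv> multiplicity (2::int) x"

end

theory Submission
  imports Defs "HOL-Number_Theory.Cong"
begin

lemma modeq_dvd: "((a::int) mod c = b mod c) \<longleftrightarrow> c dvd a - b"
  by (simp add: mod_eq_dvd_iff)

lemma half_shift:
  fixes r h :: int
  assumes "0 \<le> r" "r < 2 * h"
  shows "(r + h) mod (2 * h) = (if r < h then r + h else r - h)"
    and "(r - h) mod (2 * h) = (if r < h then r + h else r - h)"
proof -
  show "(r + h) mod (2 * h) = (if r < h then r + h else r - h)"
  proof (cases "r < h")
    case True thus ?thesis using assms by (simp add: mod_pos_pos_trivial)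
  next
    case False
    have "(r + h) mod (2 * h) = ((r - h) + 2 * h) mod (2 * h)" by (simp add: algebra_simps)
    also have "\<dots> = (r - h) mod (2 * h)" by (rule mod_add_self2)
    also have "\<dots> = r - h" using False assms by (simp add: mod_pos_pos_trivial)
    finally show ?thesis using False by simp
  qed
  show "(r - h) mod (2 * h) = (if r < h then r + h else r - h)"
  proof (cases "r < h")
    case False thus ?thesis using assms by (simp add: mod_pos_pos_trivial)
  next
    case True
    have "(r - h) mod (2 * h) = ((r + h) + (-1) * (2 * h)) mod (2 * h)" by simp
    also have "\<dots> = (r + h) mod (2 * h)" by (rule mod_mult_self1)
    also have "\<dots> = r + h" using True assms by (simp add: mod_pos_pos_trivial)
    finally show ?thesis using True by simp
  qed
qed

theorem corollary3p5:
  fixes q v :: nat and t :: int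
  assumes "prime_power q" and "odd q" and "v \<ge> 1"
    and "(int q * t) mod (2 ^ v) = t mod (2 ^ v)"
    and "t \<noteq> 0" and "nu2 t < v"
  shows "typeI_duadic_exists (2 ^ v) (int q) t \<longleftrightarrow> nu2 t < nu2 (int q - 1)"
proof -
  define n :: int where "n = 2 ^ v"
  define s where "s = nu2 t"
  define a where "a = nu2 (int q - 1)"
  have npos: "n > 0" unfolding n_def by simp
  have intn: "int (2 ^ v) = n" unfolding n_def by simp
  obtain p k where pk: "prime p" "k \<ge> 1" "q = p ^ k" using assms(1) unfolding prime_power_def by auto
  have "p \<ge> 2" using pk(1) prime_ge_2_nat by blast
  have "p ^ 1 \<le> p ^ k" using pk(2) \<open>p \<ge> 2\<close> by (intro power_increasing) auto
  hence "q \<ge> 2" using pk(3) \<open>p \<ge> 2\<close> by simp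
  hence q1: "int q - 1 \<noteq> 0" by simp
  obtain u where tu: "t = 2 ^ s * u" "\<not> 2 dvd u"
    using multiplicity_decompose'[of t 2] assms(5) s_def by auto
  obtain w where qw: "int q - 1 = 2 ^ a * w" "\<not> 2 dvd w"
    using multiplicity_decompose'[of "int q - 1" 2] q1 a_def by auto
  have copn: "coprime (int q) n" unfolding n_def
    using assms(2) by (simp add: coprime_power_right_iff)
  have qt: "n dvd (int q - 1) * t" using assms(4) unfolding n_def modeq_dvd
    by (simp add: algebra_simps)
  have sv: "s < v" using assms(6) s_def by simp
  show ?thesis
  proof
    assume "typeI_duadic_exists (2 ^ v) (int q) t"
    then obtain P where P: "P \<subseteq> Zn (2^v)" "mu_invariant (2^v) (int q) P"
      "P \<union> tau (2^v) t ` P = Zn (2^v)" "P \<inter> tau (2^v) t ` P = {}"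
      unfolding typeI_duadic_exists_def by blast
    have bad: "(int q * y) mod n \<noteq> (y + t) mod n" if "y \<in> P" for y
    proof
      assume eq: "(int q * y) mod n = (y + t) mod n"
      have "(int q * y) mod n \<in> P" using P(2) that unfolding mu_invariant_def mu_def intn
        by blast
      moreover have "(y + t) mod n \<in> tau (2^v) t ` P" using that unfolding tau_def intn by blast
      ultimately have "(y + t) mod n \<in> P \<inter> tau (2^v) t ` P" using eq by (metis IntI)
      thus False using P(4) by (metis empty_iff)
    qed
    have "s < a"
    proof (rule ccontr)
      assume "\<not> s < a"
      hence "a \<le> s" by simp
      then obtain t' where t': "t = 2 ^ a * t'" using tu
        by (metis le_Suc_ex mult.assoc power_add)
      have "coprime w n" unfolding n_def using qw(2)
        by (simp add: coprime_power_right_iff)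
      then obtain w' where w': "[w * w' = 1] (mod n)" using cong_solve_coprime_int by blast
      define x where "x = (w' * t') mod n"
      have "n dvd w * w' - 1" using w' by (simp add: cong_iff_dvd_diff)
      hence "n dvd (w * w' - 1) * (2^a * t')" by simp
      moreover have "n dvd (int q - 1) * (x - w' * t')"
        unfolding x_def by (simp add: mod_eq_dvd_iff[symmetric] mod_mod_trivial mod_diff_left_eq)
      ultimately have "n dvd (w * w' - 1) * (2^a * t') + (int q - 1) * (x - w' * t')"
        by simp
      hence sol: "n dvd int q * x - (x + t)" using qw(1) t'
        by (simp add: algebra_simps)
      have xZ: "x \<in> Zn (2^v)" unfolding x_def Zn_def intn using npos by simp
      show False
      proof (cases "x \<in> P")
        case True
        then show False using bad[OF True] sol by (simp add: modeq_dvd)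
      next
        case False
        then obtain y where y: "y \<in> P" "x = (y + t) mod n" using xZ P(3) unfolding tau_def intn by blast
        have "n dvd int q * y - (y + t)"
        proof -
          have "n dvd x - (y + t)" using y(2) by (simp add: modeq_dvd[symmetric])
          hence "n dvd int q * (x - (y + t))" by simp
          have h: "n dvd int q * (x - (y+t))" by fact
          have "n dvd - (int q * (x - (y+t))) + (int q * x - (x + t)) + (x - (y + t)) - (int q - 1) * t"
            using dvd_diff[OF dvd_add[OF dvd_add[OF iffD2[OF dvd_minus_iff h] sol] \<open>n dvd x - (y + t)\<close>] qt] .
          moreover have "- (int q * (x - (y+t))) + (int q * x - (x + t)) + (x - (y + t)) - (int q - 1) * t
             = int q * y - (y + t)" by (simp add: algebra_simps)
          ultimately show ?thesis by (simp only:)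
        qed
        thus False using bad[OF y(1)] by (simp add: modeq_dvd)
      qed
    qed
    thus "nu2 t < nu2 (int q - 1)" using s_def a_def by simp
  next
    assume "nu2 t < nu2 (int q - 1)"
    hence sa: "s < a" using s_def a_def by simp
    define D :: int where "D = 2 ^ (s+1)"
    define P where "P = {x. 0 \<le> x \<and> x < n \<and> x mod D < 2 ^ s}"
    have Dn: "D dvd n" unfolding D_def n_def by (rule le_imp_power_dvd) (use sv in simp)
    have Dq: "D dvd int q - 1" unfolding D_def qw(1)
      by (rule dvd_mult2, rule le_imp_power_dvd) (use sa in simp)
    have k1: "(int q * x) mod D = x mod D" for x
    proof -
      have "D dvd (int q - 1) * x" using Dq by simp
      thus ?thesis by (simp add: modeq_dvd algebra_simps)
    qed
    have k2: "t mod D = 2 ^ s"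
    proof -
      obtain m where "u = 2 * m + 1" using tu(2) by (metis oddE)
      hence "t = D * m + 2 ^ s" unfolding D_def tu(1) by (simp add: algebra_simps)
      thus ?thesis unfolding D_def by simp
    qed
    have k3: "(y mod n) mod D = y mod D" for y using Dn by (simp add: mod_mod_cancel)
    have Dpos: "D = 2 * 2 ^ s" unfolding D_def by simp
    have shift: "(x + t) mod D = (if x mod D < 2^s then x mod D + 2^s else x mod D - 2^s)" for x
    proof -
      have "(x + t) mod D = (x mod D + 2 ^ s) mod D" using k2 by (metis mod_add_eq)
      moreover have "0 \<le> x mod D" "x mod D < 2 * 2 ^ s" using Dpos by simp_all
      ultimately show ?thesis using half_shift(1)[of "x mod D" "2 ^ s"] Dpos by simp
    qed
    have shift2: "(x - t) mod D = (if x mod D < 2^s then x mod D + 2^s else x mod D - 2^s)" for x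
    proof -
      have "(x - t) mod D = (x mod D - 2 ^ s) mod D" using k2 by (metis mod_diff_eq)
      moreover have "0 \<le> x mod D" "x mod D < 2 * 2 ^ s" using Dpos by simp_all
      ultimately show ?thesis using half_shift(2)[of "x mod D" "2 ^ s"] Dpos by simp
    qed
    show "typeI_duadic_exists (2 ^ v) (int q) t"
      unfolding typeI_duadic_exists_def
    proof (intro exI conjI)
      show "P \<subseteq> Zn (2 ^ v)" unfolding P_def Zn_def intn by auto
      show "mu_invariant (2 ^ v) (int q) P"
        unfolding mu_invariant_def mu_def intn
      proof
        show "(\<lambda>i. int q * i mod n) ` P \<subseteq> P"
          unfolding P_def using npos k1 k3 by auto
        show "P \<subseteq> (\<lambda>i. int q * i mod n) ` P"
        proof
          fix x assume x: "x \<in> P"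
          obtain q' where q': "[int q * q' = 1] (mod n)" using copn cong_solve_coprime_int by blast
          have "D dvd int q * q' - 1" using q' Dn by (meson cong_iff_dvd_diff dvd_trans)
          hence "D dvd (int q * q' - 1) - (int q - 1) * q'" using Dq by simp
          hence "D dvd q' - 1" by (simp add: algebra_simps)
          hence "D dvd (q' - 1) * x" by simp
          hence e1: "(q' * x) mod D = x mod D" by (simp add: modeq_dvd algebra_simps)
          define y where "y = (q' * x) mod n"
          have "y \<in> P" using x e1 k3 npos unfolding y_def P_def by simp
          moreover have "int q * y mod n = x"
          proof -
            have "int q * y mod n = (int q * q') * x mod n" unfolding y_def
              by (metis mod_mult_right_eq mult.assoc)
            also have "\<dots> = x mod n" using q' unfolding cong_def
              by (metis mod_mult_left_eq mult_1)
            also have "\<dots> = x" using x unfolding P_def by simp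
            finally show ?thesis .
          qed
          ultimately show "x \<in> (\<lambda>i. int q * i mod n) ` P" by force
        qed
      qed
      show "P \<union> tau (2 ^ v) t ` P = Zn (2 ^ v)"
      proof
        show "P \<union> tau (2 ^ v) t ` P \<subseteq> Zn (2 ^ v)"
          unfolding P_def Zn_def tau_def intn using npos by auto
        show "Zn (2 ^ v) \<subseteq> P \<union> tau (2 ^ v) t ` P"
        proof
          fix z assume z: "z \<in> Zn (2 ^ v)"
          show "z \<in> P \<union> tau (2 ^ v) t ` P"
          proof (cases "z mod D < 2 ^ s")
            case True then show ?thesis using z unfolding P_def Zn_def intn by auto
          next
            case False
            define y where "y = (z - t) mod n"
            have "y \<in> P" unfolding P_def y_def using npos k3 shift2[of z] False pos_mod_bound[of D z] Dpos by auto
            moreover have "tau (2^v) t y = z" unfolding tau_def intn y_def using z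
              unfolding Zn_def intn by (simp add: mod_add_left_eq)
            ultimately show ?thesis by blast
          qed
        qed
      qed
      show "P \<inter> tau (2 ^ v) t ` P = {}"
        proof -
        have Dnn: "0 \<le> y mod D" for y using Dpos by simp
        have "False" if "x \<in> P" "y \<in> P" "x = (y + t) mod n" for x y
        proof -
          have "y mod D < 2 ^ s" using that(2) unfolding P_def by simp
          hence "(y + t) mod D = y mod D + 2 ^ s" using shift[of y] by simp
          hence "x mod D = y mod D + 2 ^ s" using that(3) k3 by simp
          moreover have "x mod D < 2 ^ s" using that(1) unfolding P_def by simp
          ultimately show False using Dnn[of y] by simp
        qed
        thus ?thesis unfolding tau_def intn by blast
      qed
    qed
  qed
qed

end
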